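(* Assume the demand is i.i.d. with pmf $P_X$. Let $\theta\in\mathcal P_S$, $\xi(w)=\sum_{(x,s):s-x=w}P_X(x)\theta(s)$, and suppose $S_1\sim\theta$. If the constant-distribution policy $\mathbf b=(b,b,\dots)$, $b\in\mathcal B$, is invariant for the initial distribution $\theta$, then for every horizon $T$, $$L_T(\mathbf b)=I(W_1;Y_1)=I(b;\xi).$$
   Context: $\mathcal X=\{0,\dots,m_x\}$, $\mathcal Y=\{0,\dots,m_y\}$, $\mathcal S=\{0,\dots,m_s\}$ with $m_x\le m_y$; $\mathcal W=\{s-x:s\in\mathcal S,x\in\mathcal X\}$; $\mathcal P_S$ the pmfs on $\mathcal S$; $\mathcal Y_\circ(w)=\{y\in\mathcal Y:w+y\in\mathcal S\}$; $\mathcal B$ the conditional pmfs $b(y\mid w)$ with $b(\mathcal Y_\circ(w)\mid w)=1$. Demand $X_t$ i.i.d. $\sim P_X$ independent of $S_1$. The constant-distribution policy $b$ draws $Y_t\sim b(\cdot\mid W_t)$ with $W_t=S_t-X_t$, and $S_{t+1}=S_t+Y_t-X_t$. Let $\theta_t(s)=P(S_t=s\mid Y^{t-1}=y^{t-1})$ and $\xi_t(w)=P(W_t=w\mid Y^{t-1}=y^{t-1})$. The policy $b$ is invariant for initial distribution $\theta_1$ if $\theta_t=\theta_1$ and $\xi_t=\xi_1$ for all $t$ (for all realizations $y^{t-1}$ of positive probability), where $\xi_1(w)=\sum_{(x,s):s-x=w}P_X(x)\theta_1(s)$. $L_T(\mathbf b)=\frac1TI(X^T,S_1;Y^T)$;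 $I(b;\xi)$ is the mutual information between $W\sim\xi$ and $Y\sim b(\cdot\mid W)$. *)

theory Defs
  imports Complex_Main
begin

definition Xset :: "nat \<Rightarrow> int set" where "Xset mx = {0..int mx}"
definition Yset :: "nat \<Rightarrow> int set" where "Yset my = {0..int my}"
definition Sset :: "nat \<Rightarrow> int set" where "Sset ms = {0..int ms}"
definition Wset :: "nat \<Rightarrow> nat \<Rightarrow> int set" where
  "Wset ms mx = {s - x | s x. s \<in> Sset ms \<and> x \<in> Xset mx}"
definition Ycirc :: "nat \<Rightarrow> nat \<Rightarrow> int \<Rightarrow> int set" where
  "Ycirc my ms w = {y \<in> Yset my. w + y \<in> Sset ms}"

definition is_pmf_on :: "'a set \<Rightarrow> ('a \<Rightarrow> real) \<Rightarrow> bool" where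
  "is_pmf_on A p \<longleftrightarrow> (\<forall>a\<in>A. p a \<ge> 0) \<and> (\<Sum>a\<in>A. p a) = 1"

text \<open>The class B of conditional pmfs b(y|w) (written b w y) with b(Y_circ(w)|w) = 1.\<close>
definition policy_class :: "nat \<Rightarrow> nat \<Rightarrow> nat \<Rightarrow> (int \<Rightarrow> int \<Rightarrow> real) set" where
  "policy_class mx my ms = {b. \<forall>w\<in>Wset ms mx. is_pmf_on (Yset my) (b w)
      \<and> (\<Sum>y\<in>Ycirc my ms w. b w y) = 1}"

definition seqs :: "'a set \<Rightarrow> nat \<Rightarrow> 'a list set" where
  "seqs A n = {xs. set xs \<subseteq> A \<and> length xs = n}"

text \<open>Path weight: P(X^n = xs, Y^n = ys | S_1 = s) under the constant policy b,
  with W_t = S_t - X_t, Y_t ~ b(.|W_t), S_{t+1} = W_t + Y_t.\<close>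
fun path_wt :: "(int \<Rightarrow> real) \<Rightarrow> (int \<Rightarrow> int \<Rightarrow> real) \<Rightarrow> int \<Rightarrow> int list \<Rightarrow> int list \<Rightarrow> real" where
  "path_wt PX b s [] [] = 1"
| "path_wt PX b s (x # xs) (y # ys) = PX x * b (s - x) y * path_wt PX b (s - x + y) xs ys"
| "path_wt PX b s _ _ = 0"

fun path_state :: "int \<Rightarrow> int list \<Rightarrow> int list \<Rightarrow> int" where
  "path_state s [] [] = s"
| "path_state s (x # xs) (y # ys) = path_state (s - x + y) xs ys"
| "path_state s _ _ = s"

definition joint :: "(int \<Rightarrow> real) \<Rightarrow> (int \<Rightarrow> real) \<Rightarrow> (int \<Rightarrow> int \<Rightarrow> real)
    \<Rightarrow> int \<Rightarrow> int list \<Rightarrow> int list \<Rightarrow> real" where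
  "joint PX \<theta> b s1 xs ys = \<theta> s1 * path_wt PX b s1 xs ys"

text \<open>P(S_t = s, Y^{t-1} = ys), where length ys = t - 1.\<close>
definition PS_Y :: "nat \<Rightarrow> nat \<Rightarrow> (int \<Rightarrow> real) \<Rightarrow> (int \<Rightarrow> real) \<Rightarrow> (int \<Rightarrow> int \<Rightarrow> real)
    \<Rightarrow> int \<Rightarrow> int list \<Rightarrow> real" where
  "PS_Y mx ms PX \<theta> b s ys = (\<Sum>s1\<in>Sset ms. \<Sum>xs\<in>seqs (Xset mx) (length ys).
      if path_state s1 xs ys = s then joint PX \<theta> b s1 xs ys else 0)"

text \<open>P(W_t = w, Y^{t-1} = ys), with X_t ~ PX drawn independently of the past.\<close>
definition PW_Y :: "nat \<Rightarrow> nat \<Rightarrow> (int \<Rightarrow> real) \<Rightarrow> (int \<Rightarrow> real) \<Rightarrow> (int \<Rightarrow> int \<Rightarrow> real)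
    \<Rightarrow> int \<Rightarrow> int list \<Rightarrow> real" where
  "PW_Y mx ms PX \<theta> b w ys = (\<Sum>s1\<in>Sset ms. \<Sum>xs\<in>seqs (Xset mx) (length ys). \<Sum>x\<in>Xset mx.
      if path_state s1 xs ys - x = w then joint PX \<theta> b s1 xs ys * PX x else 0)"

definition PY :: "nat \<Rightarrow> nat \<Rightarrow> (int \<Rightarrow> real) \<Rightarrow> (int \<Rightarrow> real) \<Rightarrow> (int \<Rightarrow> int \<Rightarrow> real)
    \<Rightarrow> int list \<Rightarrow> real" where
  "PY mx ms PX \<theta> b ys = (\<Sum>s1\<in>Sset ms. \<Sum>xs\<in>seqs (Xset mx) (length ys). joint PX \<theta> b s1 xs ys)"

definition xi_of :: "nat \<Rightarrow> nat \<Rightarrow> (int \<Rightarrow> real) \<Rightarrow> (int \<Rightarrow> real) \<Rightarrow> int \<Rightarrow> real" where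
  "xi_of mx ms PX \<theta> w = (\<Sum>(x, s)\<in>{(x, s). x \<in> Xset mx \<and> s \<in> Sset ms \<and> s - x = w}. PX x * \<theta> s)"

text \<open>Invariance: for all t \<ge> 1 and all y^{t-1} of positive probability,
  theta_t = theta_1 on S and xi_t = xi_1 on W.\<close>
definition invariant :: "nat \<Rightarrow> nat \<Rightarrow> nat \<Rightarrow> (int \<Rightarrow> real) \<Rightarrow> (int \<Rightarrow> real)
    \<Rightarrow> (int \<Rightarrow> int \<Rightarrow> real) \<Rightarrow> bool" where
  "invariant mx my ms PX \<theta> b \<longleftrightarrow>
    (\<forall>n. \<forall>ys\<in>seqs (Yset my) n. PY mx ms PX \<theta> b ys > 0 \<longrightarrow>
       (\<forall>s\<in>Sset ms. PS_Y mx ms PX \<theta> b s ys / PY mx ms PX \<theta> b ys = \<theta> s) \<and>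
       (\<forall>w\<in>Wset ms mx. PW_Y mx ms PX \<theta> b w ys / PY mx ms PX \<theta> b ys = xi_of mx ms PX \<theta> w))"

definition mutual_info :: "'a set \<Rightarrow> 'b set \<Rightarrow> ('a \<Rightarrow> 'b \<Rightarrow> real) \<Rightarrow> real" where
  "mutual_info A B p = (\<Sum>a\<in>A. \<Sum>c\<in>B.
     if p a c = 0 then 0
     else p a c * log 2 (p a c / ((\<Sum>c'\<in>B. p a c') * (\<Sum>a'\<in>A. p a' c))))"

text \<open>L_T(b) = (1/T) I(X^T, S_1; Y^T).\<close>
definition L_T :: "nat \<Rightarrow> nat \<Rightarrow> nat \<Rightarrow> (int \<Rightarrow> real) \<Rightarrow> (int \<Rightarrow> real) \<Rightarrow> (int \<Rightarrow> int \<Rightarrow> real)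
    \<Rightarrow> nat \<Rightarrow> real" where
  "L_T mx my ms PX \<theta> b T = (1 / real T) *
     mutual_info (Sset ms \<times> seqs (Xset mx) T) (seqs (Yset my) T)
       (\<lambda>(s1, xs) ys. joint PX \<theta> b s1 xs ys)"

definition I_W1Y1 :: "nat \<Rightarrow> nat \<Rightarrow> nat \<Rightarrow> (int \<Rightarrow> real) \<Rightarrow> (int \<Rightarrow> real) \<Rightarrow> (int \<Rightarrow> int \<Rightarrow> real) \<Rightarrow> real" where
  "I_W1Y1 mx my ms PX \<theta> b = mutual_info (Wset ms mx) (Yset my)
     (\<lambda>w y. \<Sum>s1\<in>Sset ms. \<Sum>x\<in>Xset mx. if s1 - x = w then joint PX \<theta> b s1 [x] [y] else 0)"

definition I_b_xi :: "int set \<Rightarrow> int set \<Rightarrow> (int \<Rightarrow> int \<Rightarrow> real) \<Rightarrow> (int \<Rightarrow> real) \<Rightarrow> real" where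
  "I_b_xi W Y b \<xi> = mutual_info W Y (\<lambda>w y. \<xi> w * b w y)"

end

theory Submission
  imports Defs
begin


lemma finite_seqs: "finite A \<Longrightarrow> finite (seqs A n)"
  unfolding seqs_def by (rule finite_lists_length_eq)

lemma seqs_0[simp]: "seqs A 0 = {[]}"
  unfolding seqs_def by auto

lemma seqs_Suc: "seqs A (Suc n) = (\<lambda>(x,xs). x # xs) ` (A \<times> seqs A n)"
  unfolding seqs_def by (auto simp: length_Suc_conv image_iff)

lemma sum_seqs_Suc:
  assumes "finite A"
  shows "(\<Sum>zs\<in>seqs A (Suc n). f zs) = (\<Sum>x\<in>A. \<Sum>xs\<in>seqs A n. f (x # xs))"
proof -
  have inj: "inj_on (\<lambda>(x,xs). x # xs) (A \<times> seqs A n)" by (auto simp: inj_on_def)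
  have "(\<Sum>zs\<in>seqs A (Suc n). f zs) = (\<Sum>p\<in>A \<times> seqs A n. f ((\<lambda>(x,xs). x # xs) p))"
    unfolding seqs_Suc by (rule sum.reindex[OF inj, unfolded comp_def])
  also have "\<dots> = (\<Sum>x\<in>A. \<Sum>xs\<in>seqs A n. f (x # xs))"
    unfolding sum.cartesian_product by (intro sum.cong) auto
  finally show ?thesis .
qed

lemma seqs_snoc: "seqs A (Suc n) = (\<lambda>(xs,x). xs @ [x]) ` (seqs A n \<times> A)"
proof -
  have "zs \<in> (\<lambda>(xs,x). xs @ [x]) ` (seqs A n \<times> A)" if "zs \<in> seqs A (Suc n)" for zs
  proof -
    from that have "zs \<noteq> []" by (auto simp: seqs_def)
    then obtain xs x where "zs = xs @ [x]" by (metis rev_exhaust)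
    with that show ?thesis by (auto simp: seqs_def image_iff)
  qed
  then show ?thesis by (auto simp: seqs_def)
qed

lemma sum_seqs_snoc:
  assumes "finite A"
  shows "(\<Sum>zs\<in>seqs A (Suc n). f zs) = (\<Sum>xs\<in>seqs A n. \<Sum>x\<in>A. f (xs @ [x]))"
proof -
  have inj: "inj_on (\<lambda>(xs,x). xs @ [x]) (seqs A n \<times> A)" by (auto simp: inj_on_def)
  have "(\<Sum>zs\<in>seqs A (Suc n). f zs) = (\<Sum>p\<in>seqs A n \<times> A. f ((\<lambda>(xs,x). xs @ [x]) p))"
    unfolding seqs_snoc by (rule sum.reindex[OF inj, unfolded comp_def])
  also have "\<dots> = (\<Sum>xs\<in>seqs A n. \<Sum>x\<in>A. f (xs @ [x]))"
    unfolding sum.cartesian_product by (intro sum.cong) auto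
  finally show ?thesis .
qed

lemma sum_seqs_1: "finite A \<Longrightarrow> (\<Sum>zs\<in>seqs A (Suc 0). f zs) = (\<Sum>x\<in>A. f [x])"
  by (simp add: sum_seqs_Suc)

lemma path_wt_snoc:
  "length xs = length ys \<Longrightarrow> path_wt PX b s (xs @ [x]) (ys @ [y])
     = path_wt PX b s xs ys * (PX x * b (path_state s xs ys - x) y)"
proof (induction xs arbitrary: ys s)
  case Nil then show ?case by simp
next
  case (Cons a xs) then show ?case by (cases ys) auto
qed

lemma path_wt_len: "length xs \<noteq> length ys \<Longrightarrow> path_wt PX b s xs ys = 0"
proof (induction xs arbitrary: ys s)
  case Nil then show ?case by (cases ys) auto
next
  case (Cons a xs) then show ?case by (cases ys) auto
qed

fun lsum :: "(int \<Rightarrow> real) \<Rightarrow> (int \<Rightarrow> int \<Rightarrow> real) \<Rightarrow> int \<Rightarrow> int list \<Rightarrow> int list \<Rightarrow> real" where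
  "lsum r b s (x # xs) (y # ys) = log 2 (b (s - x) y / r y) + lsum r b (s - x + y) xs ys"
| "lsum r b s _ _ = 0"

lemma mutual_info_cong:
  "(\<And>a c. a \<in> A \<Longrightarrow> c \<in> B \<Longrightarrow> p a c = q a c) \<Longrightarrow> mutual_info A B p = mutual_info A B q"
proof -
  assume h: "\<And>a c. a \<in> A \<Longrightarrow> c \<in> B \<Longrightarrow> p a c = q a c"
  have "\<And>a c. a \<in> A \<Longrightarrow> c \<in> B \<Longrightarrow> (\<Sum>c'\<in>B. p a c') = (\<Sum>c'\<in>B. q a c')" by (simp add: h)
  moreover have "\<And>a c. a \<in> A \<Longrightarrow> c \<in> B \<Longrightarrow> (\<Sum>a'\<in>A. p a' c) = (\<Sum>a'\<in>A. q a' c)" by (simp add: h)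
  ultimately show ?thesis unfolding mutual_info_def by (intro sum.cong refl) (simp add: h)
qed

lemma swap3: "(\<Sum>a\<in>A. \<Sum>b\<in>B. \<Sum>c\<in>C. f a b c) = (\<Sum>b\<in>B. \<Sum>c\<in>C. \<Sum>a\<in>A. f a b c)"
  by (subst sum.swap, rule sum.cong[OF refl], rule sum.swap)

lemma swap4: "(\<Sum>a\<in>A. \<Sum>b\<in>B. \<Sum>c\<in>C. \<Sum>d\<in>D. f a b c d) = (\<Sum>b\<in>B. \<Sum>c\<in>C. \<Sum>d\<in>D. \<Sum>a\<in>A. f a b c d)"
  by (subst sum.swap, rule sum.cong[OF refl], rule swap3)

lemma prod_list_pos: "(\<forall>x\<in>set xs. (f x::real) > 0) \<Longrightarrow> prod_list (map f xs) > 0"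
  by (induction xs) auto



locale L6 =
  fixes mx my ms :: nat and PX \<theta> :: "int \<Rightarrow> real" and b :: "int \<Rightarrow> int \<Rightarrow> real"
  assumes PXp: "is_pmf_on (Xset mx) PX" and THp: "is_pmf_on (Sset ms) \<theta>"
    and Bp: "b \<in> policy_class mx my ms"
begin

abbreviation "X \<equiv> Xset mx"
abbreviation "Y \<equiv> Yset my"
abbreviation "S \<equiv> Sset ms"
abbreviation "W \<equiv> Wset ms mx"
abbreviation "pw \<equiv> path_wt PX b"
abbreviation "\<xi> \<equiv> xi_of mx ms PX \<theta>"

definition r :: "int \<Rightarrow> real" where "r y = (\<Sum>w\<in>W. \<xi> w * b w y)"

lemma finX[simp]: "finite X" by (simp add: Xset_def)
lemma finY[simp]: "finite Y" by (simp add: Yset_def)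
lemma finS[simp]: "finite S" by (simp add: Sset_def)
lemma W_eq: "W = (\<lambda>(s,x). s - x) ` (S \<times> X)" by (auto simp: Wset_def)
lemma finW[simp]: "finite W" by (simp add: W_eq)
lemma SXW: "s \<in> S \<Longrightarrow> x \<in> X \<Longrightarrow> s - x \<in> W" by (auto simp: Wset_def)

lemma PX_nn: "x \<in> X \<Longrightarrow> PX x \<ge> 0" using PXp by (simp add: is_pmf_on_def)
lemma PX_sum: "(\<Sum>x\<in>X. PX x) = 1" using PXp by (simp add: is_pmf_on_def)
lemma th_nn: "s \<in> S \<Longrightarrow> \<theta> s \<ge> 0" using THp by (simp add: is_pmf_on_def)
lemma th_sum: "(\<Sum>s\<in>S. \<theta> s) = 1" using THp by (simp add: is_pmf_on_def)
lemma b_nn: "w \<in> W \<Longrightarrow> y \<in> Y \<Longrightarrow> b w y \<ge> 0" using Bp by (simp add: policy_class_def is_pmf_on_def)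
lemma b_sum: "w \<in> W \<Longrightarrow> (\<Sum>y\<in>Y. b w y) = 1" using Bp by (simp add: policy_class_def is_pmf_on_def)
lemma b_zero:
  assumes "w \<in> W" "y \<in> Y" "w + y \<notin> S" shows "b w y = 0"
proof -
  have c: "(\<Sum>y\<in>Ycirc my ms w. b w y) = 1" using Bp assms(1) by (simp add: policy_class_def)
  have sub: "Ycirc my ms w \<subseteq> Y" by (auto simp: Ycirc_def)
  have "(\<Sum>y\<in>Y. b w y) = (\<Sum>y\<in>Ycirc my ms w. b w y) + (\<Sum>y\<in>Y - Ycirc my ms w. b w y)"
    using sub by (metis add.commute finY sum.subset_diff)
  then have "(\<Sum>y\<in>Y - Ycirc my ms w. b w y) = 0" using c b_sum[OF assms(1)] by simp
  moreover have "y \<in> Y - Ycirc my ms w" using assms by (auto simp: Ycirc_def)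
  ultimately show ?thesis
    using sum_nonneg_eq_0_iff[of "Y - Ycirc my ms w" "b w"] b_nn[OF assms(1)] by auto
qed

lemma step_S: "s \<in> S \<Longrightarrow> x \<in> X \<Longrightarrow> y \<in> Y \<Longrightarrow> b (s - x) y \<noteq> 0 \<Longrightarrow> s - x + y \<in> S"
  using b_zero SXW by blast

lemma pw_nn: "s \<in> S \<Longrightarrow> set xs \<subseteq> X \<Longrightarrow> set ys \<subseteq> Y \<Longrightarrow> pw s xs ys \<ge> 0"
proof (induction xs arbitrary: ys s)
  case Nil then show ?case by (cases ys) auto
next
  case (Cons x xs)
  show ?case
  proof (cases ys)
    case Nil then show ?thesis by simp
  next
    case (Cons y ys')
    show ?thesis
    proof (cases "b (s - x) y = 0")
      case True then show ?thesis using Cons by simp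
    next
      case False
      then have "s - x + y \<in> S" using step_S Cons.prems \<open>ys = y # ys'\<close> by auto
      then have "pw (s - x + y) xs ys' \<ge> 0" using Cons.IH Cons.prems \<open>ys = y # ys'\<close> by auto
      moreover have "PX x \<ge> 0" "b (s - x) y \<ge> 0" using Cons.prems \<open>ys = y # ys'\<close>
        by (auto intro!: PX_nn b_nn SXW)
      ultimately show ?thesis using \<open>ys = y # ys'\<close> by simp
    qed
  qed
qed

lemma pw_state: "s \<in> S \<Longrightarrow> set xs \<subseteq> X \<Longrightarrow> set ys \<subseteq> Y \<Longrightarrow> pw s xs ys \<noteq> 0 \<Longrightarrow> path_state s xs ys \<in> S"
proof (induction xs arbitrary: ys s)
  case Nil then show ?case by (cases ys) auto
next
  case (Cons x xs)
  show ?case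
  proof (cases ys)
    case Nil then show ?thesis using Cons by simp
  next
    case (Cons y ys')
    with Cons.prems have "b (s - x) y \<noteq> 0" "pw (s - x + y) xs ys' \<noteq> 0" by auto
    then have "s - x + y \<in> S" using step_S Cons.prems \<open>ys = y # ys'\<close> by auto
    then show ?thesis using Cons.IH Cons.prems \<open>ys = y # ys'\<close> \<open>pw (s - x + y) xs ys' \<noteq> 0\<close> by auto
  qed
qed

lemma mass: "s \<in> S \<Longrightarrow> set xs \<subseteq> X \<Longrightarrow> (\<Sum>ys\<in>seqs Y (length xs). pw s xs ys) = prod_list (map PX xs)"
proof (induction xs arbitrary: s)
  case Nil then show ?case by simp
next
  case (Cons x xs)
  have "(\<Sum>ys\<in>seqs Y (length (x # xs)). pw s (x # xs) ys)
      = (\<Sum>y\<in>Y. PX x * b (s - x) y * (\<Sum>ys\<in>seqs Y (length xs). pw (s - x + y) xs ys))"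
    by (simp add: sum_seqs_Suc sum_distrib_left)
  also have "\<dots> = (\<Sum>y\<in>Y. PX x * b (s - x) y * prod_list (map PX xs))"
  proof (intro sum.cong refl)
    fix y assume y: "y \<in> Y"
    show "PX x * b (s - x) y * (\<Sum>ys\<in>seqs Y (length xs). pw (s - x + y) xs ys)
          = PX x * b (s - x) y * prod_list (map PX xs)"
    proof (cases "b (s - x) y = 0")
      case False
      then have "s - x + y \<in> S" using step_S Cons.prems y by auto
      then show ?thesis using Cons.IH Cons.prems by simp
    qed simp
  qed
  also have "\<dots> = PX x * prod_list (map PX xs) * (\<Sum>y\<in>Y. b (s - x) y)"
    by (simp add: sum_distrib_left sum_distrib_right mult_ac)
  also have "\<dots> = prod_list (map PX (x # xs))" using b_sum[OF SXW] Cons.prems by simp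
  finally show ?case .
qed

lemma sum_prodPX: "(\<Sum>xs\<in>seqs X n. prod_list (map PX xs)) = 1"
proof (induction n)
  case 0 then show ?case by simp
next
  case (Suc n)
  then show ?case by (simp add: sum_seqs_Suc sum_distrib_right[symmetric] sum_distrib_left[symmetric] PX_sum)
qed

lemma total: "s \<in> S \<Longrightarrow> (\<Sum>xs\<in>seqs X n. \<Sum>ys\<in>seqs Y n. pw s xs ys) = 1"
proof -
  assume s: "s \<in> S"
  have "(\<Sum>xs\<in>seqs X n. \<Sum>ys\<in>seqs Y n. pw s xs ys) = (\<Sum>xs\<in>seqs X n. prod_list (map PX xs))"
    by (intro sum.cong refl) (use mass[OF s] in \<open>auto simp: seqs_def\<close>)
  then show ?thesis by (simp add: sum_prodPX)
qed

lemma xi_alt: "\<xi> w = (\<Sum>s\<in>S. \<Sum>x\<in>X. if s - x = w then \<theta> s * PX x else 0)"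
proof -
  have e: "{(x, s). x \<in> X \<and> s \<in> S \<and> s - x = w} = {p \<in> X \<times> S. snd p - fst p = w}" by auto
  have "\<xi> w = (\<Sum>p\<in>X \<times> S. if snd p - fst p = w then PX (fst p) * \<theta> (snd p) else 0)"
    unfolding xi_of_def e by (subst sum.inter_filter) (auto intro!: sum.cong simp: case_prod_beta)
  also have "\<dots> = (\<Sum>x\<in>X. \<Sum>s\<in>S. if s - x = w then \<theta> s * PX x else 0)"
    unfolding sum.cartesian_product by (intro sum.cong refl) (auto simp: mult.commute)
  also have "\<dots> = (\<Sum>s\<in>S. \<Sum>x\<in>X. if s - x = w then \<theta> s * PX x else 0)"
    by (rule sum.swap)
  finally show ?thesis .
qed

lemma xi_nn: "\<xi> w \<ge> 0"
  unfolding xi_alt by (auto intro!: sum_nonneg mult_nonneg_nonneg th_nn PX_nn)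

lemma reindex_xi: "(\<Sum>s\<in>S. \<Sum>x\<in>X. \<theta> s * PX x * f (s - x)) = (\<Sum>w\<in>W. \<xi> w * f w)"
proof -
  have "(\<Sum>w\<in>W. \<xi> w * f w) = (\<Sum>w\<in>W. \<Sum>s\<in>S. \<Sum>x\<in>X. if s - x = w then \<theta> s * PX x * f w else 0)"
    unfolding xi_alt sum_distrib_right by (intro sum.cong refl) simp
  also have "\<dots> = (\<Sum>s\<in>S. \<Sum>x\<in>X. \<Sum>w\<in>W. if s - x = w then \<theta> s * PX x * f w else 0)"
    by (subst sum.swap) (subst (2) sum.swap, rule refl)
  also have "\<dots> = (\<Sum>s\<in>S. \<Sum>x\<in>X. \<theta> s * PX x * f (s - x))"
    by (intro sum.cong refl) (simp add: SXW)
  finally show ?thesis by simp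
qed

lemma r_nn: "y \<in> Y \<Longrightarrow> r y \<ge> 0"
  unfolding r_def by (auto intro!: sum_nonneg mult_nonneg_nonneg xi_nn b_nn)

end


locale L6i = L6 +
  assumes INV: "invariant mx my ms PX \<theta> b"
begin

abbreviation "PY' \<equiv> PY mx ms PX \<theta> b"
abbreviation "PW' \<equiv> PW_Y mx ms PX \<theta> b"
abbreviation "PS' \<equiv> PS_Y mx ms PX \<theta> b"

lemma seqs_set: "xs \<in> seqs A n \<Longrightarrow> set xs \<subseteq> A \<and> length xs = n" by (simp add: seqs_def)

lemma tnn: "s1 \<in> S \<Longrightarrow> xs \<in> seqs X n \<Longrightarrow> set ys \<subseteq> Y \<Longrightarrow> \<theta> s1 * pw s1 xs ys \<ge> 0"
  by (metis mult_nonneg_nonneg pw_nn seqs_set th_nn)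

lemma PY_snoc_aux:
  assumes ys: "set ys \<subseteq> Y" and y: "y \<in> Y"
  shows "PY' (ys @ [y]) = (\<Sum>s1\<in>S. \<Sum>xs\<in>seqs X (length ys). \<Sum>x\<in>X.
            \<theta> s1 * pw s1 xs ys * (PX x * b (path_state s1 xs ys - x) y))"
proof -
  have "PY' (ys @ [y]) = (\<Sum>s1\<in>S. \<Sum>zs\<in>seqs X (Suc (length ys)). \<theta> s1 * pw s1 zs (ys @ [y]))"
    unfolding PY_def joint_def by simp
  also have "\<dots> = (\<Sum>s1\<in>S. \<Sum>xs\<in>seqs X (length ys). \<Sum>x\<in>X. \<theta> s1 * pw s1 (xs @ [x]) (ys @ [y]))"
    by (simp add: sum_seqs_snoc)
  also have "\<dots> = (\<Sum>s1\<in>S. \<Sum>xs\<in>seqs X (length ys). \<Sum>x\<in>X.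
            \<theta> s1 * pw s1 xs ys * (PX x * b (path_state s1 xs ys - x) y))"
    by (intro sum.cong refl) (simp add: path_wt_snoc seqs_def)
  finally show ?thesis .
qed

lemma PY_snoc_W:
  assumes ys: "set ys \<subseteq> Y" and y: "y \<in> Y"
  shows "PY' (ys @ [y]) = (\<Sum>w\<in>W. PW' w ys * b w y)"
proof -
  let ?T = "\<lambda>s1 xs x. \<theta> s1 * pw s1 xs ys * PX x"
  let ?st = "\<lambda>s1 xs. path_state s1 xs ys"
  have "(\<Sum>w\<in>W. PW' w ys * b w y)
      = (\<Sum>w\<in>W. \<Sum>s1\<in>S. \<Sum>xs\<in>seqs X (length ys). \<Sum>x\<in>X. if ?st s1 xs - x = w then ?T s1 xs x * b w y else 0)"
    unfolding PW_Y_def joint_def sum_distrib_right by (intro sum.cong refl) simp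
  also have "\<dots> = (\<Sum>s1\<in>S. \<Sum>xs\<in>seqs X (length ys). \<Sum>x\<in>X. \<Sum>w\<in>W. if ?st s1 xs - x = w then ?T s1 xs x * b w y else 0)"
    by (rule swap4)
  also have "\<dots> = (\<Sum>s1\<in>S. \<Sum>xs\<in>seqs X (length ys). \<Sum>x\<in>X. ?T s1 xs x * b (?st s1 xs - x) y)"
  proof (intro sum.cong refl)
    fix s1 xs x assume h: "s1 \<in> S" "xs \<in> seqs X (length ys)" "x \<in> X"
    show "(\<Sum>w\<in>W. if ?st s1 xs - x = w then ?T s1 xs x * b w y else 0) = ?T s1 xs x * b (?st s1 xs - x) y"
    proof (cases "pw s1 xs ys = 0")
      case False
      then have "?st s1 xs \<in> S" using pw_state h ys seqs_set by blast
      then show ?thesis using SXW h by simp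
    qed simp
  qed
  also have "\<dots> = PY' (ys @ [y])" unfolding PY_snoc_aux[OF ys y]
    by (intro sum.cong refl) (simp add: mult_ac)
  finally show ?thesis by simp
qed

lemma PY_nn: "set ys \<subseteq> Y \<Longrightarrow> PY' ys \<ge> 0"
  unfolding PY_def joint_def by (auto intro!: sum_nonneg tnn)

lemma PY_snoc:
  assumes ys: "set ys \<subseteq> Y" and y: "y \<in> Y"
  shows "PY' (ys @ [y]) = PY' ys * r y"
proof (cases "PY' ys > 0")
  case True
  have "ys \<in> seqs Y (length ys)" using ys by (simp add: seqs_def)
  with INV True have "\<forall>w\<in>W. PW' w ys / PY' ys = \<xi> w" unfolding invariant_def by blast
  then have "\<forall>w\<in>W. PW' w ys = \<xi> w * PY' ys" using True by (auto simp: field_simps)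
  then show ?thesis unfolding PY_snoc_W[OF ys y] r_def sum_distrib_left
    by (intro sum.cong refl) (simp add: mult_ac)
next
  case False
  then have z: "PY' ys = 0" using PY_nn[OF ys] by simp
  have "\<forall>s1\<in>S. \<forall>xs\<in>seqs X (length ys). \<theta> s1 * pw s1 xs ys = 0"
  proof (intro ballI)
    fix s1 xs assume h: "s1 \<in> S" "xs \<in> seqs X (length ys)"
    have "(\<Sum>s1\<in>S. \<Sum>xs\<in>seqs X (length ys). \<theta> s1 * pw s1 xs ys) = 0"
      using z unfolding PY_def joint_def .
    then have "(\<Sum>xs\<in>seqs X (length ys). \<theta> s1 * pw s1 xs ys) = 0"
      using h by (subst (asm) sum_nonneg_eq_0_iff) (auto intro!: sum_nonneg tnn ys)
    then show "\<theta> s1 * pw s1 xs ys = 0"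
      using h by (subst (asm) sum_nonneg_eq_0_iff) (auto intro!: tnn ys finite_seqs)
  qed
  then show ?thesis unfolding PY_snoc_aux[OF ys y] z by (force intro!: sum.neutral)
qed

lemma PY_prod: "set ys \<subseteq> Y \<Longrightarrow> PY' ys = prod_list (map r ys)"
proof (induction ys rule: rev_induct)
  case Nil then show ?case by (simp add: PY_def joint_def th_sum)
next
  case (snoc y ys) then show ?case by (simp add: PY_snoc)
qed

lemma one_step:
  assumes y: "y \<in> Y" and s': "s' \<in> S"
  shows "(\<Sum>s1\<in>S. \<Sum>x\<in>X. if s1 - x + y = s' then \<theta> s1 * PX x * b (s1 - x) y else 0)
        = \<theta> s' * (\<Sum>s1\<in>S. \<Sum>x\<in>X. \<theta> s1 * PX x * b (s1 - x) y)"
proof -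
  have ePS: "PS' s' [y] = (\<Sum>s1\<in>S. \<Sum>x\<in>X. if s1 - x + y = s' then \<theta> s1 * PX x * b (s1 - x) y else 0)"
    unfolding PS_Y_def joint_def by (simp add: sum_seqs_1 mult.assoc cong: if_cong)
  have ePY: "PY' [y] = (\<Sum>s1\<in>S. \<Sum>x\<in>X. \<theta> s1 * PX x * b (s1 - x) y)"
    unfolding PY_def joint_def by (simp add: sum_seqs_1 mult.assoc)
  have nn: "\<And>s1 x. s1 \<in> S \<Longrightarrow> x \<in> X \<Longrightarrow> \<theta> s1 * PX x * b (s1 - x) y \<ge> 0"
    by (simp add: PX_nn SXW b_nn th_nn y)
  show ?thesis
  proof (cases "PY' [y] > 0")
    case True
    have "[y] \<in> seqs Y (Suc 0)" using y by (simp add: seqs_def)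
    with INV True s' have "PS' s' [y] / PY' [y] = \<theta> s'" unfolding invariant_def by blast
    then have "PS' s' [y] = \<theta> s' * PY' [y]" using True by (auto simp: field_simps)
    then show ?thesis using ePS ePY by simp
  next
    case False
    have "PY' [y] \<ge> 0" using y PY_nn by simp
    with False have z: "PY' [y] = 0" by simp
    have "\<forall>s1\<in>S. \<forall>x\<in>X. \<theta> s1 * PX x * b (s1 - x) y = 0"
    proof (intro ballI)
      fix s1 x assume h: "s1 \<in> S" "x \<in> X"
      have "(\<Sum>x\<in>X. \<theta> s1 * PX x * b (s1 - x) y) = 0"
        using z h unfolding ePY by (subst (asm) sum_nonneg_eq_0_iff) (auto intro!: sum_nonneg nn)
      then show "\<theta> s1 * PX x * b (s1 - x) y = 0"
        using h by (subst (asm) sum_nonneg_eq_0_iff) (auto intro!: nn)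
    qed
    then have "(\<Sum>s1\<in>S. \<Sum>x\<in>X. if s1 - x + y = s' then \<theta> s1 * PX x * b (s1 - x) y else 0) = 0"
      "(\<Sum>s1\<in>S. \<Sum>x\<in>X. \<theta> s1 * PX x * b (s1 - x) y) = 0"
      by (force intro!: sum.neutral)+
    then show ?thesis by simp
  qed
qed

lemma station:
  "(\<Sum>s1\<in>S. \<Sum>x\<in>X. \<Sum>y\<in>Y. \<theta> s1 * PX x * b (s1 - x) y * F (s1 - x + y)) = (\<Sum>s\<in>S. \<theta> s * F s)"
proof -
  have "(\<Sum>s1\<in>S. \<Sum>x\<in>X. \<Sum>y\<in>Y. \<theta> s1 * PX x * b (s1 - x) y * F (s1 - x + y))
      = (\<Sum>y\<in>Y. \<Sum>s1\<in>S. \<Sum>x\<in>X. \<theta> s1 * PX x * b (s1 - x) y * F (s1 - x + y))"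
    by (rule swap3[symmetric])
  also have "\<dots> = (\<Sum>y\<in>Y. \<Sum>s1\<in>S. \<Sum>x\<in>X. \<Sum>s'\<in>S. if s1 - x + y = s' then \<theta> s1 * PX x * b (s1 - x) y * F s' else 0)"
  proof (intro sum.cong refl)
    fix y s1 x assume h: "y \<in> Y" "s1 \<in> S" "x \<in> X"
    show "\<theta> s1 * PX x * b (s1 - x) y * F (s1 - x + y) =
        (\<Sum>s'\<in>S. if s1 - x + y = s' then \<theta> s1 * PX x * b (s1 - x) y * F s' else 0)"
      using step_S[OF h(2,3,1)] by auto
  qed
  also have "\<dots> = (\<Sum>y\<in>Y. \<Sum>s'\<in>S. (\<Sum>s1\<in>S. \<Sum>x\<in>X. if s1 - x + y = s' then \<theta> s1 * PX x * b (s1 - x) y else 0) * F s')"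
  proof (rule sum.cong[OF refl])
    fix y assume "y \<in> Y"
    show "(\<Sum>s1\<in>S. \<Sum>x\<in>X. \<Sum>s'\<in>S. if s1 - x + y = s' then \<theta> s1 * PX x * b (s1 - x) y * F s' else 0) =
        (\<Sum>s'\<in>S. (\<Sum>s1\<in>S. \<Sum>x\<in>X. if s1 - x + y = s' then \<theta> s1 * PX x * b (s1 - x) y else 0) * F s')"
    proof -
      have "(\<Sum>s1\<in>S. \<Sum>x\<in>X. \<Sum>s'\<in>S. if s1 - x + y = s' then \<theta> s1 * PX x * b (s1 - x) y * F s' else 0)
          = (\<Sum>s'\<in>S. \<Sum>s1\<in>S. \<Sum>x\<in>X. if s1 - x + y = s' then \<theta> s1 * PX x * b (s1 - x) y * F s' else 0)"
        by (rule swap3[symmetric])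
      also have "\<dots> = (\<Sum>s'\<in>S. (\<Sum>s1\<in>S. \<Sum>x\<in>X. if s1 - x + y = s' then \<theta> s1 * PX x * b (s1 - x) y else 0) * F s')"
        unfolding sum_distrib_right by (intro sum.cong refl) simp
      finally show "(\<Sum>s1\<in>S. \<Sum>x\<in>X. \<Sum>s'\<in>S. if s1 - x + y = s' then \<theta> s1 * PX x * b (s1 - x) y * F s' else 0)
          = (\<Sum>s'\<in>S. (\<Sum>s1\<in>S. \<Sum>x\<in>X. if s1 - x + y = s' then \<theta> s1 * PX x * b (s1 - x) y else 0) * F s')" .
    qed
  qed
  also have "\<dots> = (\<Sum>y\<in>Y. \<Sum>s'\<in>S. \<theta> s' * F s' * (\<Sum>s1\<in>S. \<Sum>x\<in>X. \<theta> s1 * PX x * b (s1 - x) y))"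
    by (intro sum.cong refl) (simp add: one_step mult_ac)
  also have "\<dots> = (\<Sum>s'\<in>S. \<theta> s' * F s' * (\<Sum>y\<in>Y. \<Sum>s1\<in>S. \<Sum>x\<in>X. \<theta> s1 * PX x * b (s1 - x) y))"
    by (subst sum.swap) (simp add: sum_distrib_left)
  also have "(\<Sum>y\<in>Y. \<Sum>s1\<in>S. \<Sum>x\<in>X. \<theta> s1 * PX x * b (s1 - x) y) = (\<Sum>s1\<in>S. \<Sum>x\<in>X. \<Sum>y\<in>Y. \<theta> s1 * PX x * b (s1 - x) y)"
    by (rule swap3)
  also have "(\<Sum>s1\<in>S. \<Sum>x\<in>X. \<Sum>y\<in>Y. \<theta> s1 * PX x * b (s1 - x) y) = 1"
  proof -
    have "(\<Sum>s1\<in>S. \<Sum>x\<in>X. \<Sum>y\<in>Y. \<theta> s1 * PX x * b (s1 - x) y) = (\<Sum>s1\<in>S. \<Sum>x\<in>X. \<theta> s1 * PX x)"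
      by (intro sum.cong refl) (simp add: sum_distrib_left[symmetric] b_sum SXW)
    also have "\<dots> = 1" by (simp add: sum_distrib_left[symmetric] PX_sum th_sum)
    finally show ?thesis .
  qed
  finally show ?thesis by simp
qed

end


lemma pw_PX: "path_wt PX b s xs ys \<noteq> 0 \<Longrightarrow> \<forall>x\<in>set xs. PX x \<noteq> 0"
proof (induction xs arbitrary: s ys)
  case Nil then show ?case by simp
next
  case (Cons x xs) then show ?case by (cases ys) auto
qed

lemma log_id:
  "path_wt PX b s xs ys \<noteq> 0 \<Longrightarrow> (\<forall>y\<in>set ys. r y \<noteq> 0) \<Longrightarrow>
   log 2 (path_wt PX b s xs ys / (prod_list (map PX xs) * prod_list (map r ys))) = lsum r b s xs ys"
proof (induction xs arbitrary: s ys)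
  case Nil then show ?case by (cases ys) auto
next
  case (Cons x xs)
  then obtain y ys' where ys: "ys = y # ys'" by (cases ys) auto
  let ?p = "path_wt PX b (s - x + y) xs ys'"
  have nz: "PX x \<noteq> 0" "b (s - x) y \<noteq> 0" "?p \<noteq> 0" using Cons.prems ys by auto
  have r: "r y \<noteq> 0" "\<forall>y\<in>set ys'. r y \<noteq> 0" using Cons.prems ys by auto
  have P: "prod_list (map PX xs) \<noteq> 0" using pw_PX[OF nz(3)] by (auto simp: prod_list_zero_iff)
  have R: "prod_list (map r ys') \<noteq> 0" using r(2) by (auto simp: prod_list_zero_iff)
  have "path_wt PX b s (x # xs) ys / (prod_list (map PX (x # xs)) * prod_list (map r ys))
      = (b (s - x) y / r y) * (?p / (prod_list (map PX xs) * prod_list (map r ys')))"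
    using nz r by (simp add: ys field_simps)
  also have "log 2 \<dots> = log 2 (b (s - x) y / r y) + log 2 (?p / (prod_list (map PX xs) * prod_list (map r ys')))"
    by (subst log_mult) (simp add: nz r P R)
  finally show ?case using Cons.IH[OF nz(3) r(2)] ys by simp
qed

context L6i begin

abbreviation "lg w y \<equiv> log 2 (b w y / r y)"
definition J :: real where "J = (\<Sum>w\<in>W. \<Sum>y\<in>Y. \<xi> w * b w y * lg w y)"

lemma MI_eq:
  "mutual_info (S \<times> seqs X T) (seqs Y T) (\<lambda>(s1, xs) ys. joint PX \<theta> b s1 xs ys)
   = (\<Sum>s1\<in>S. \<Sum>xs\<in>seqs X T. \<Sum>ys\<in>seqs Y T. \<theta> s1 * pw s1 xs ys * lsum r b s1 xs ys)"
proof -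
  have key: "(if joint PX \<theta> b s1 xs ys = 0 then 0 else joint PX \<theta> b s1 xs ys *
       log 2 (joint PX \<theta> b s1 xs ys / ((\<Sum>c'\<in>seqs Y T. (\<lambda>(s1, xs) ys. joint PX \<theta> b s1 xs ys) (s1, xs) c') *
        (\<Sum>a'\<in>S \<times> seqs X T. (\<lambda>(s1, xs) ys. joint PX \<theta> b s1 xs ys) a' ys))))
      = \<theta> s1 * pw s1 xs ys * lsum r b s1 xs ys"
    if h: "s1 \<in> S" "xs \<in> seqs X T" "ys \<in> seqs Y T" for s1 xs ys
  proof -
    have xs: "set xs \<subseteq> X" "length xs = T" and ys: "set ys \<subseteq> Y" "length ys = T"
      using h by (auto simp: seqs_def)
    have A: "(\<Sum>c'\<in>seqs Y T. (\<lambda>(s1, xs) ys. joint PX \<theta> b s1 xs ys) (s1, xs) c') = \<theta> s1 * prod_list (map PX xs)"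
      using mass[OF h(1) xs(1)] xs(2) by (simp add: joint_def sum_distrib_left[symmetric])
    have B: "(\<Sum>a'\<in>S \<times> seqs X T. (\<lambda>(s1, xs) ys. joint PX \<theta> b s1 xs ys) a' ys) = PY' ys"
      unfolding PY_def ys(2) sum.cartesian_product by (intro sum.cong refl) (auto split: prod.splits)
    show ?thesis
    proof (cases "joint PX \<theta> b s1 xs ys = 0")
      case True then show ?thesis by (simp add: joint_def)
    next
      case False
      then have th: "\<theta> s1 \<noteq> 0" and p: "pw s1 xs ys \<noteq> 0" by (auto simp: joint_def)
      have jpos: "joint PX \<theta> b s1 xs ys > 0"
        using False tnn[OF h(1,2) ys(1)] by (simp add: joint_def less_le)
      have "joint PX \<theta> b s1 xs ys \<le> (\<Sum>xs'\<in>seqs X T. joint PX \<theta> b s1 xs' ys)"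
        using h tnn ys(1) by (intro member_le_sum) (auto simp: joint_def finite_seqs)
      also have "\<dots> \<le> PY' ys"
        unfolding PY_def ys(2) using h tnn ys(1)
        by (intro member_le_sum[where f="\<lambda>s1. \<Sum>xs'\<in>seqs X T. joint PX \<theta> b s1 xs' ys"])
           (auto simp: joint_def finite_seqs intro!: sum_nonneg)
      finally have "PY' ys > 0" using jpos by simp
      then have R: "prod_list (map r ys) \<noteq> 0" using PY_prod[OF ys(1)] by simp
      then have rnz: "\<forall>y\<in>set ys. r y \<noteq> 0" by (auto simp: prod_list_zero_iff)
      have "joint PX \<theta> b s1 xs ys / (\<theta> s1 * prod_list (map PX xs) * PY' ys)
          = pw s1 xs ys / (prod_list (map PX xs) * prod_list (map r ys))"
        using th by (simp add: joint_def PY_prod[OF ys(1)] mult.assoc)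
      then have e: "joint PX \<theta> b s1 xs ys / (\<theta> s1 * prod_list (map PX xs) * PY' ys) = pw s1 xs ys / (prod_list (map PX xs) * prod_list (map r ys))" .
      show ?thesis unfolding A B using False by (simp only: e log_id[OF p rnz] if_False) (simp add: joint_def)
    qed
  qed
  have "mutual_info (S \<times> seqs X T) (seqs Y T) (\<lambda>(s1, xs) ys. joint PX \<theta> b s1 xs ys)
      = (\<Sum>a\<in>S \<times> seqs X T. (\<lambda>(s1,xs). \<Sum>ys\<in>seqs Y T. \<theta> s1 * pw s1 xs ys * lsum r b s1 xs ys) a)"
    unfolding mutual_info_def
  proof (rule sum.cong[OF refl])
    fix a assume a: "a \<in> S \<times> seqs X T"
    obtain s1 xs where "a = (s1, xs)" by (cases a)
    with a key show "(\<Sum>c\<in>seqs Y T. if (case a of (s1, xs) \<Rightarrow> \<lambda>ys. joint PX \<theta> b s1 xs ys) c = 0 then 0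
            else (case a of (s1, xs) \<Rightarrow> \<lambda>ys. joint PX \<theta> b s1 xs ys) c *
                 log 2 ((case a of (s1, xs) \<Rightarrow> \<lambda>ys. joint PX \<theta> b s1 xs ys) c /
                        ((\<Sum>c'\<in>seqs Y T. (case a of (s1, xs) \<Rightarrow> \<lambda>ys. joint PX \<theta> b s1 xs ys) c') *
                         (\<Sum>a'\<in>S \<times> seqs X T. (case a' of (s1, xs) \<Rightarrow> \<lambda>ys. joint PX \<theta> b s1 xs ys) c)))) =
          (case a of (s1, xs) \<Rightarrow> \<Sum>ys\<in>seqs Y T. \<theta> s1 * pw s1 xs ys * lsum r b s1 xs ys)"
      by (auto intro!: sum.cong)
  qed
  also have "\<dots> = (\<Sum>s1\<in>S. \<Sum>xs\<in>seqs X T. \<Sum>ys\<in>seqs Y T. \<theta> s1 * pw s1 xs ys * lsum r b s1 xs ys)"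
    by (rule sum.cartesian_product[symmetric])
  finally show ?thesis .
qed

end


context L6i begin

definition F :: "nat \<Rightarrow> int \<Rightarrow> real" where
  "F T s = (\<Sum>xs\<in>seqs X T. \<Sum>ys\<in>seqs Y T. pw s xs ys * lsum r b s xs ys)"

lemma F_Suc:
  assumes s: "s \<in> S"
  shows "F (Suc T) s = (\<Sum>x\<in>X. \<Sum>y\<in>Y. PX x * b (s - x) y * (lg (s - x) y + F T (s - x + y)))"
proof -
  have "F (Suc T) s = (\<Sum>x\<in>X. \<Sum>xs\<in>seqs X T. \<Sum>y\<in>Y. \<Sum>ys\<in>seqs Y T.
          PX x * b (s - x) y * (pw (s - x + y) xs ys * (lg (s - x) y + lsum r b (s - x + y) xs ys)))"
    unfolding F_def by (simp add: sum_seqs_Suc mult_ac)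
  also have "\<dots> = (\<Sum>x\<in>X. \<Sum>y\<in>Y. \<Sum>xs\<in>seqs X T. \<Sum>ys\<in>seqs Y T.
          PX x * b (s - x) y * (pw (s - x + y) xs ys * (lg (s - x) y + lsum r b (s - x + y) xs ys)))"
    by (rule sum.cong[OF refl], rule sum.swap)
  also have "\<dots> = (\<Sum>x\<in>X. \<Sum>y\<in>Y. PX x * b (s - x) y * (lg (s - x) y + F T (s - x + y)))"
  proof (intro sum.cong refl)
    fix x y assume xy: "x \<in> X" "y \<in> Y"
    show "(\<Sum>xs\<in>seqs X T. \<Sum>ys\<in>seqs Y T.
          PX x * b (s - x) y * (pw (s - x + y) xs ys * (lg (s - x) y + lsum r b (s - x + y) xs ys)))
        = PX x * b (s - x) y * (lg (s - x) y + F T (s - x + y))"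
    proof (cases "b (s - x) y = 0")
      case False
      then have s': "s - x + y \<in> S" using step_S s xy by auto
      have "(\<Sum>xs\<in>seqs X T. \<Sum>ys\<in>seqs Y T.
          PX x * b (s - x) y * (pw (s - x + y) xs ys * (lg (s - x) y + lsum r b (s - x + y) xs ys)))
          = PX x * b (s - x) y * (lg (s - x) y * (\<Sum>xs\<in>seqs X T. \<Sum>ys\<in>seqs Y T. pw (s - x + y) xs ys)
             + F T (s - x + y))"
        unfolding F_def by (simp add: sum_distrib_left sum_distrib_right sum.distrib distrib_left mult_ac)
      then show ?thesis using total[OF s'] by simp
    qed simp
  qed
  finally show ?thesis .
qed

lemma F_0: "F 0 s = 0" by (simp add: F_def)

lemma G_step: "(\<Sum>s\<in>S. \<theta> s * F (Suc T) s) = J + (\<Sum>s\<in>S. \<theta> s * F T s)"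
proof -
  have "(\<Sum>s\<in>S. \<theta> s * F (Suc T) s) = (\<Sum>s\<in>S. \<Sum>x\<in>X. \<theta> s * PX x * (\<Sum>y\<in>Y. b (s - x) y * lg (s - x) y))
      + (\<Sum>s\<in>S. \<Sum>x\<in>X. \<Sum>y\<in>Y. \<theta> s * PX x * b (s - x) y * F T (s - x + y))"
    unfolding sum.distrib[symmetric]
    by (intro sum.cong refl) (simp add: F_Suc sum_distrib_left sum.distrib distrib_left mult_ac)
  also have "(\<Sum>s\<in>S. \<Sum>x\<in>X. \<theta> s * PX x * (\<Sum>y\<in>Y. b (s - x) y * lg (s - x) y)) = J"
    unfolding reindex_xi[of "\<lambda>w. \<Sum>y\<in>Y. b w y * lg w y"] J_def
    by (simp add: sum_distrib_left mult_ac)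
  also have "(\<Sum>s\<in>S. \<Sum>x\<in>X. \<Sum>y\<in>Y. \<theta> s * PX x * b (s - x) y * F T (s - x + y)) = (\<Sum>s\<in>S. \<theta> s * F T s)"
    by (rule station)
  finally show ?thesis .
qed

lemma G_T: "(\<Sum>s\<in>S. \<theta> s * F T s) = real T * J"
proof (induction T)
  case 0 then show ?case by (simp add: F_0)
next
  case (Suc T) then show ?case by (simp add: G_step algebra_simps)
qed

lemma MI_T: "mutual_info (S \<times> seqs X T) (seqs Y T) (\<lambda>(s1, xs) ys. joint PX \<theta> b s1 xs ys) = real T * J"
  unfolding MI_eq G_T[symmetric] F_def by (simp add: sum_distrib_left mult_ac)

lemma Ibxi: "I_b_xi W Y b \<xi> = J"
  unfolding I_b_xi_def mutual_info_def J_def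
proof (intro sum.cong refl)
  fix w y assume wy: "w \<in> W" "y \<in> Y"
  have A: "(\<Sum>c'\<in>Y. \<xi> w * b w c') = \<xi> w" using b_sum[OF wy(1)] by (simp add: sum_distrib_left[symmetric])
  have B: "(\<Sum>a'\<in>W. \<xi> a' * b a' y) = r y" by (simp add: r_def)
  show "(if \<xi> w * b w y = 0 then 0 else \<xi> w * b w y * log 2 (\<xi> w * b w y / ((\<Sum>c'\<in>Y. \<xi> w * b w c') * (\<Sum>a'\<in>W. \<xi> a' * b a' y))))
      = \<xi> w * b w y * lg w y"
    unfolding A B by auto
qed

lemma IW1: "I_W1Y1 mx my ms PX \<theta> b = I_b_xi W Y b \<xi>"
  unfolding I_W1Y1_def I_b_xi_def
proof (rule mutual_info_cong)
  fix w y assume "w \<in> W" "y \<in> Y"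
  show "(\<Sum>s1\<in>S. \<Sum>x\<in>X. if s1 - x = w then joint PX \<theta> b s1 [x] [y] else 0) = \<xi> w * b w y"
    unfolding xi_alt sum_distrib_right joint_def by (intro sum.cong refl) auto
qed

end

theorem lemma6:
  fixes mx my ms :: nat and PX \<theta> :: "int \<Rightarrow> real" and b :: "int \<Rightarrow> int \<Rightarrow> real" and T :: nat
  assumes "mx \<le> my"
    and "is_pmf_on (Xset mx) PX"
    and "is_pmf_on (Sset ms) \<theta>"
    and "b \<in> policy_class mx my ms"
    and "invariant mx my ms PX \<theta> b"
    and "T \<ge> 1"
  shows "L_T mx my ms PX \<theta> b T = I_W1Y1 mx my ms PX \<theta> b
       \<and> I_W1Y1 mx my ms PX \<theta> b = I_b_xi (Wset ms mx) (Yset my) b (xi_of mx ms PX \<theta>)"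
proof -
  interpret L6i mx my ms PX \<theta> b
    by (intro L6i.intro L6.intro L6i_axioms.intro) (use assms in auto)
  have "L_T mx my ms PX \<theta> b T = J"
    unfolding L_T_def MI_T using assms(6) by simp
  then show ?thesis using IW1 Ibxi by simp
qed

end
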